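(* Let $\mathbb P\in\mathbb\Psi^m_H(M)$ with $\Re(m)<-d_H$, and write $\mathbb k=(\mathcal L_Z-m)\mathbb P$. For every integer $n\ge1$ and $h\ge0$, \[\mathrm{tr}_h(\mathbb P)=\sum_{j=0}^{n-1}\frac{h^j}{j!\,(j-m-d_H)}\mathrm{tr}_0^{(j)}(\mathbb k)+\frac{h^n}{(n-1)!}\int_0^1\mathrm{tr}^{(n)}_{hu}(\mathbb k)\,u^{n-m-d_H-1}\Big(\int_u^1t^{m+d_H-n}(1-t)^{n-1}dt\Big)du.\] In particular, if $P\in\Psi^m_H(M)$ and $\mathbb P_1=P$, \[\mathrm{tr}(P)=\sum_{j=0}^{n-1}\frac{1}{j!\,(j-m-d_H)}\mathrm{tr}_0^{(j)}(\mathbb k)+\frac{1}{(n-1)!}\int_0^1\mathrm{tr}^{(n)}_u(\mathbb k)\,u^{n-m-d_H-1}\,\mathrm B(1-u;n,m+d_H-n+1)\,du,\] where $\mathrm B(x;\alpha,\beta)=\int_0^xt^{\alpha-1}(1-t)^{\beta-1}dt$.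
   Context: $(M,H)$ Carnot manifold, homogeneous dimension $d_H$; $\mathbb T_HM$ its $H$-tangent groupoid over $M\times\mathbb R$; $\mathcal L_Z$ the generator of pushforward by the zoom action $\alpha_\lambda$ ($(x,y,h)\mapsto(x,y,\lambda^{-1}h)$, $((x,z),0)\mapsto((x,\delta_\lambda z),0)$). $\mathbb\Psi^m_H(M)$: $r$-fibred distributions $\mathbb P$ with $(\mathcal L_Z-m)\mathbb P\in C^\infty_p(\mathbb T_HM,\Omega_r)$ (smooth $r$-fibre densities, $r,s$-proper support); $\Psi^m_H(M)=\{\mathbb P_1\}$, $\mathbb P_1$ the restriction to $h=1$. Local trace $\mathrm{tr}_h$: restriction of a smooth $r$-fibre density to the unit space point $(x,x,h)$ (resp. $((x,0),0)$ at $h=0$), a density on $M$; $\mathrm{tr}^{(j)}_h(\mathbb f)=\frac{d^j}{dh^j}\mathrm{tr}_h(\mathbb f)$. For $\Re(m)<-d_H$, $\mathrm{tr}_h(\mathbb P)=\int_0^1\mathrm{tr}_{\lambda h}((\mathcal L_Z-m)\mathbb P)\lambda^{-m-d_H-1}d\lambda$, and $\mathrm{tr}(P):=\mathrm{tr}_1(\mathbb P)$. *)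

theory Defs
  imports "HOL-Analysis.Analysis"
begin

text \<open>Abstraction: the local trace h \<mapsto> tr_h(k) of the smooth r-fibre density k = (L_Z - m)P,
  at a fixed point x of M (in a local trivialisation of the density bundle), is a smooth
  function g : real \<Rightarrow> complex.  d is the homogeneous dimension d_H.\<close>

definition hderiv :: "nat \<Rightarrow> (real \<Rightarrow> 'a::real_normed_vector) \<Rightarrow> real \<Rightarrow> 'a" where
  "hderiv j f = ((\<lambda>f x. vector_derivative f (at x)) ^^ j) f"

definition trP :: "(real \<Rightarrow> complex) \<Rightarrow> complex \<Rightarrow> nat \<Rightarrow> real \<Rightarrow> complex" where
  "trP g m d h = integral {0..1} (\<lambda>l. g (l * h) * (complex_of_real l) powr (- m - of_nat d - 1))"

definition betainc :: "real \<Rightarrow> complex \<Rightarrow> complex \<Rightarrow> complex" where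
  "betainc x a b = integral {0..x}
     (\<lambda>t. (complex_of_real t) powr (a - 1) * (complex_of_real (1 - t)) powr (b - 1))"

end

theory Submission
  imports Defs
begin


abbreviation cp :: "real \<Rightarrow> complex \<Rightarrow> complex" where "cp t s \<equiv> (complex_of_real t) powr s"

lemma cp_deriv:
  assumes "0 < t"
  shows "((\<lambda>x. cp x s) has_vector_derivative (s * cp t (s - 1))) (at t within S)"
proof -
  have "((\<lambda>z. z powr s) has_field_derivative (s * (of_real t) powr (s-1))) (at (of_real t))"
    by (rule has_field_derivative_powr) (use assms in \<open>auto simp: complex_nonpos_Reals_iff\<close>)
  moreover have "(complex_of_real has_vector_derivative 1) (at t)"
    using has_vector_derivative_of_real[of "\<lambda>x. x" 1 "at t"] by (simp add: DERIV_ident)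
  ultimately have "(((\<lambda>z. z powr s) \<circ> complex_of_real) has_vector_derivative (1 * (s * (of_real t) powr (s-1)))) (at t)"
    using field_vector_diff_chain_at by blast
  then show ?thesis by (simp add: o_def has_vector_derivative_at_within)
qed

lemma cp_cont:
  assumes "0 \<le> e" "e = 0 \<Longrightarrow> Re s > 0"
  shows "continuous_on {e..b} (\<lambda>x. cp x s)"
  by (rule continuous_on_powr_complex) (use assms in \<open>auto intro!: continuous_intros\<close>)

lemma cp_add1: "t \<noteq> 0 \<Longrightarrow> cp t (s + 1) = of_real t * cp t s"
  by (simp add: powr_add)

lemma cp_nat: "t \<noteq> 0 \<Longrightarrow> cp t (of_nat k) = of_real t ^ k"
  by (simp add: powr_nat')

lemma cp_inv: "t \<noteq> 0 \<Longrightarrow> cp t s * cp t (-s) = 1"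
  by (simp add: powr_add[symmetric])

lemma pow_der: "((\<lambda>t. of_real t ^ n :: complex) has_vector_derivative (of_nat n * of_real t ^ (n-1))) (at t within S)"
proof -
  have "((\<lambda>x. x ^ n) has_real_derivative (of_nat n * t ^ (n-1))) (at t within S)"
    by (rule derivative_eq_intros refl | simp)+
  from has_vector_derivative_of_real[OF this] show ?thesis by simp
qed

primrec Uf :: "complex \<Rightarrow> nat \<Rightarrow> real \<Rightarrow> complex" where
  "Uf a 0 u = (1 - cp u a) / a"
| "Uf a (Suc k) u = integral {u..1} (Uf a k)"

lemma Uf_Suc_fun: "Uf a (Suc k) = (\<lambda>u. integral {u..1} (Uf a k))"
  by auto

lemma Uf_cont: "Re a > 0 \<Longrightarrow> continuous_on {0..1} (Uf a k)"
proof (induction k)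
  case 0
  then show ?case unfolding Uf.simps
    by (intro continuous_intros cp_cont) auto
next
  case (Suc k)
  then show ?case unfolding Uf_Suc_fun
    by (intro indefinite_integral_continuous_1' integrable_continuous_real)
qed

lemma Uf_der: "Re a > 0 \<Longrightarrow> t \<in> {0..1} \<Longrightarrow> (Uf a (Suc k) has_vector_derivative - Uf a k t) (at t within {0..1})"
  unfolding Uf_Suc_fun by (intro integral_has_vector_derivative' Uf_cont)

lemma Uf0_der:
  assumes "a \<noteq> 0" "0 < t"
  shows "(Uf a 0 has_vector_derivative - cp t (a-1)) (at t)"
proof -
  have "((\<lambda>u. (1 - cp u a) * (1/a)) has_vector_derivative ((0 - a * cp t (a-1)) * (1/a))) (at t)"
    by (intro has_vector_derivative_mult_left has_vector_derivative_diff has_vector_derivative_const cp_deriv assms)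
  moreover have "Uf a 0 = (\<lambda>u. (1 - cp u a) * (1/a))" by auto
  ultimately show ?thesis using assms by simp
qed

lemma Uf_one: "Uf a k 1 = 0"
  by (cases k) simp_all



lemma one_plus_nat_nz[simp]: "(1 + of_nat p :: complex) \<noteq> 0"
  using of_nat_neq_0[of p, where ?'a=complex] by simp

lemma int_pow: "((\<lambda>t. of_real t ^ p :: complex) has_integral 1 / (of_nat p + 1)) {0..1}"
proof -
  have "((\<lambda>t. of_nat (Suc p) * of_real t ^ (Suc p - 1) / of_nat (Suc p)) has_integral
        (of_real 1 ^ Suc p / of_nat (Suc p) - of_real 0 ^ Suc p / of_nat (Suc p) :: complex)) {0..1}"
    by (intro fundamental_theorem_of_calculus has_vector_derivative_divide pow_der) auto
  moreover have "(1 + of_nat p :: complex) \<noteq> 0"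
    using of_nat_neq_0[of p, where ?'a=complex] by simp
  ultimately show ?thesis by (simp add: add.commute)
qed

lemma int_cp:
  assumes "Re s > 0"
  shows "((\<lambda>t. cp t s) has_integral 1 / (s + 1)) {0..1}"
proof -
  have nz: "s + 1 \<noteq> 0" using assms by (auto simp: complex_eq_iff)
  have "((\<lambda>t. (s + 1) * cp t (s + 1 - 1) / (s + 1)) has_integral
        (cp 1 (s+1) / (s+1) - cp 0 (s+1) / (s+1))) {0..1}"
    by (intro fundamental_theorem_of_calculus_interior has_vector_derivative_divide cp_deriv
          continuous_intros cp_cont) (use assms nz in auto)
  then show ?thesis using nz by simp
qed

lemma Uf_J:
  assumes a: "Re a > 0"
  shows "((\<lambda>t. of_real t ^ p * Uf a k t) has_integral
           (of_nat (fact p) / (of_nat (fact (p+k+1)) * (of_nat (p+k+1) + a)))) {0..1}"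
  using assms
proof (induction k arbitrary: p)
  case 0
  have anz: "a \<noteq> 0" using a by auto
  have pa: "Re (of_nat p + a) > 0" using a by simp
  have nz: "of_nat p + a + 1 \<noteq> 0" using pa by (auto simp: complex_eq_iff)
  have "((\<lambda>t. (of_real t ^ p - cp t (of_nat p + a)) * (1/a)) has_integral
          ((1 / (of_nat p + 1) - 1 / (of_nat p + a + 1)) * (1/a))) {0..1}"
    by (intro has_integral_mult_left has_integral_diff int_pow int_cp pa)
  then have "((\<lambda>t. of_real t ^ p * Uf a 0 t) has_integral
          ((1 / (of_nat p + 1) - 1 / (of_nat p + a + 1)) * (1/a))) {0..1}"
  proof (rule has_integral_eq[rotated])
    fix t :: real assume "t \<in> {0..1}"
    show "(of_real t ^ p - cp t (of_nat p + a)) * (1/a) = of_real t ^ p * Uf a 0 t"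
    proof (cases "t = 0")
      case True then show ?thesis by simp
    next
      case False then show ?thesis by (simp add: powr_add cp_nat field_simps)
    qed
  qed
  moreover have "(1 / (of_nat p + 1) - 1 / (of_nat p + a + 1)) * (1/a)
      = of_nat (fact p) / (of_nat (fact (p+0+1)) * (of_nat (p+0+1) + a))"
  proof -
    have p1: "(of_nat p + 1 :: complex) \<noteq> 0"
      using of_nat_neq_0[of p, where ?'a=complex] by (simp add: add.commute)
    have fp: "(of_nat (fact p) :: complex) \<noteq> 0" by simp
    have ff: "(of_nat (fact (p+0+1)) :: complex) = (of_nat p + 1) * of_nat (fact p)"
      by (simp del: of_nat_fact add: algebra_simps)
    have gen: "\<And>F::complex. F \<noteq> 0 \<Longrightarrow> (1 / (of_nat p + 1) - 1 / (of_nat p + a + 1)) * (1/a)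
        = F / ((of_nat p + 1) * F * (of_nat (p+0+1) + a))"
    proof -
      fix F :: complex assume F: "F \<noteq> 0"
      have e1: "\<And>P::complex. P \<noteq> 0 \<Longrightarrow> P + a \<noteq> 0 \<Longrightarrow> (1/P - 1/(P+a))*(1/a) = 1/(P*(P+a))"
        using anz by (simp add: field_simps)
      have "(1 / (of_nat p + 1) - 1 / (of_nat p + a + 1)) * (1/a) = 1 / ((of_nat p + 1) * (of_nat p + 1 + a))"
        using e1[OF p1] nz by (simp add: add_ac)
      also have "\<dots> = F / ((of_nat p + 1) * F * (of_nat (p+0+1) + a))"
        using F by (simp add: add_ac)
      finally show "(1 / (of_nat p + 1) - 1 / (of_nat p + a + 1)) * (1/a)
        = F / ((of_nat p + 1) * F * (of_nat (p+0+1) + a))" .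
    qed
    show ?thesis unfolding ff by (rule gen[OF fp])
  qed
  ultimately show ?case by simp
next
  case (Suc k)
  have IH: "((\<lambda>t. of_real t ^ (Suc p) * Uf a k t) has_integral
           (of_nat (fact (Suc p)) / (of_nat (fact (Suc p+k+1)) * (of_nat (Suc p+k+1) + a)))) {0..1}"
    using Suc by blast
  define F where "F t = of_real t ^ Suc p / of_nat (Suc p) * Uf a (Suc k) t" for t
  have "((\<lambda>t. of_real t ^ Suc p / of_nat (Suc p) * (- Uf a k t) + of_nat (Suc p) * of_real t ^ (Suc p - 1) / of_nat (Suc p) * Uf a (Suc k) t)
      has_integral (F 1 - F 0)) {0..1}"
    unfolding F_def
    by (intro fundamental_theorem_of_calculus has_vector_derivative_mult has_vector_derivative_divide pow_der Uf_der a) auto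
  moreover have "F 1 - F 0 = 0" by (simp add: F_def Uf_one)
  ultimately have D0: "((\<lambda>t. of_real t ^ Suc p / of_nat (Suc p) * (- Uf a k t) + of_nat (Suc p) * of_real t ^ (Suc p - 1) / of_nat (Suc p) * Uf a (Suc k) t)
      has_integral 0) {0..1}" by simp
  have sp: "(of_nat (Suc p) :: complex) \<noteq> 0" by (rule of_nat_neq_0)
  from D0 have D: "((\<lambda>t. of_real t ^ p * Uf a (Suc k) t - (1 / of_nat (Suc p)) * (of_real t ^ Suc p * Uf a k t))
      has_integral 0) {0..1}"
  proof (rule has_integral_eq[rotated])
    fix t :: real
    show "of_real t ^ Suc p / of_nat (Suc p) * (- Uf a k t) + of_nat (Suc p) * of_real t ^ (Suc p - 1) / of_nat (Suc p) * Uf a (Suc k) t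
       = of_real t ^ p * Uf a (Suc k) t - (1 / of_nat (Suc p)) * (of_real t ^ Suc p * Uf a k t)"
      using sp by (simp del: Uf.simps of_nat_Suc add: field_simps)
  qed
  have "((\<lambda>t. (of_real t ^ p * Uf a (Suc k) t - (1 / of_nat (Suc p)) * (of_real t ^ Suc p * Uf a k t))
         + (1 / of_nat (Suc p)) * (of_real t ^ Suc p * Uf a k t)) has_integral
        0 + (1 / of_nat (Suc p)) * (of_nat (fact (Suc p)) / (of_nat (fact (Suc p+k+1)) * (of_nat (Suc p+k+1) + a)))) {0..1}"
    by (intro has_integral_add D has_integral_mult_right IH)
  moreover have "(1 / of_nat (Suc p)) * (of_nat (fact (Suc p)) / (of_nat (fact (Suc p+k+1)) * (of_nat (Suc p+k+1) + a)))
      = (of_nat (fact p) / (of_nat (fact (p + Suc k + 1)) * (of_nat (p + Suc k + 1) + a)) :: complex)"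
  proof -
    have e: "(of_nat (fact (Suc p)) :: complex) = of_nat (Suc p) * of_nat (fact p)"
      by (simp only: fact_Suc of_nat_mult of_nat_id)
    have e2: "Suc p + k + 1 = p + Suc k + 1" by simp
    have g: "\<And>n F X. n \<noteq> 0 \<Longrightarrow> (1/n) * (n*F/X) = F/(X::complex)" by simp
    show ?thesis unfolding e e2 by (rule g[OF sp])
  qed
  ultimately show ?case by simp
qed

lemma Uf_zero:
  assumes a: "Re a > 0"
  shows "Uf a k 0 = 1 / (of_nat (fact k) * (of_nat k + a))"
proof (cases k)
  case 0
  then show ?thesis by simp
next
  case (Suc j)
  have "(Uf a j has_integral (of_nat (fact 0) / (of_nat (fact (0+j+1)) * (of_nat (0+j+1) + a)))) {0..1}"
    using Uf_J[OF a, of 0 j] by simp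
  then show ?thesis using Suc by (simp add: integral_unique)
qed



lemma hderiv_0[simp]: "hderiv 0 g = g"
  by (simp add: hderiv_def)

lemma hderiv_Suc: "hderiv (Suc j) g = (\<lambda>x. vector_derivative (hderiv j g) (at x))"
  by (simp add: hderiv_def)

lemma main_lemma:
  fixes g :: "real \<Rightarrow> complex" and m :: complex
  assumes smooth: "\<And>j x. hderiv j g differentiable (at x)"
    and m: "Re m < - real d"
  shows "trP g m d h = (\<Sum>j<Suc k. complex_of_real (h ^ j) / (of_nat (fact j) * (of_nat j - m - of_nat d)) * hderiv j g 0)
     + of_real (h ^ Suc k) * integral {0..1} (\<lambda>u. hderiv (Suc k) g (h*u) * Uf (-m - of_nat d) k u)"
proof -
  define a where "a = -m - of_nat d"
  have a: "Re a > 0" using m by (simp add: a_def)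
  have anz: "a \<noteq> 0" using a by auto
  have hD: "(hderiv j g has_vector_derivative hderiv (Suc j) g x) (at x)" for j x
    unfolding hderiv_Suc using smooth vector_derivative_works by blast
  have C0: "continuous_on UNIV (hderiv j g)" for j
    using smooth by (simp add: continuous_at_imp_continuous_on differentiable_imp_continuous_within)
  have hC: "continuous_on S (\<lambda>u. hderiv j g (h*u))" for j S
    by (intro continuous_on_compose2[OF C0] continuous_intros) auto
  have hDc: "((\<lambda>u. hderiv j g (h*u)) has_vector_derivative (of_real h * hderiv (Suc j) g (h*u))) (at u within S)" for j u S
  proof -
    have "((\<lambda>u. h*u) has_vector_derivative h) (at u)"
      using has_real_derivative_iff_has_vector_derivative DERIV_cmult_Id by blast
    from vector_diff_chain_at[OF this hD[of j "h*u"]]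
    show ?thesis by (simp add: o_def scaleR_conv_of_real has_vector_derivative_at_within)
  qed
  have hC0: "continuous_on S (\<lambda>u. g (h*u))" for S using hC[of S 0] by simp
  have int: "(\<lambda>u. hderiv j g (h*u) * Uf a i u) integrable_on {0..1}" for j i
    by (intro integrable_continuous_real continuous_intros hC Uf_cont a)
  show ?thesis unfolding a_def[symmetric]
  proof (induction k)
    case 0
    define F where "F u = g (h*u) * Uf a 0 u" for u
    have "((\<lambda>u. g (h*u) * (- cp u (a-1)) + of_real h * hderiv (Suc 0) g (h*u) * Uf a 0 u) has_integral (F 1 - F 0)) {0..1}"
      unfolding F_def
      by (intro fundamental_theorem_of_calculus_interior has_vector_derivative_mult Uf0_der anz
           hDc[of 0, simplified] continuous_intros hC0 Uf_cont a) auto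
    moreover have "F 1 - F 0 = - (g 0 / a)" by (simp add: F_def Uf_one)
    ultimately have R: "((\<lambda>u. g (h*u) * (- cp u (a-1)) + of_real h * hderiv (Suc 0) g (h*u) * Uf a 0 u) has_integral - (g 0 / a)) {0..1}"
      by simp
    have A: "((\<lambda>u. of_real h * (hderiv (Suc 0) g (h*u) * Uf a 0 u)) has_integral
        of_real h * integral {0..1} (\<lambda>u. hderiv (Suc 0) g (h*u) * Uf a 0 u)) {0..1}"
      by (intro has_integral_mult_right integrable_integral int)
    have "((\<lambda>u. of_real h * (hderiv (Suc 0) g (h*u) * Uf a 0 u) - (g (h*u) * (- cp u (a-1)) + of_real h * hderiv (Suc 0) g (h*u) * Uf a 0 u))
       has_integral (of_real h * integral {0..1} (\<lambda>u. hderiv (Suc 0) g (h*u) * Uf a 0 u) - - (g 0 / a))) {0..1}"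
      by (rule has_integral_diff[OF A R])
    then have "((\<lambda>u. of_real h * (hderiv (Suc 0) g (h*u) * Uf a 0 u) - (g (h*u) * (- cp u (a-1)) + of_real h * hderiv (Suc 0) g (h*u) * Uf a 0 u))
       has_integral (of_real h * integral {0..1} (\<lambda>u. hderiv (Suc 0) g (h*u) * Uf a 0 u) + g 0 / a)) {0..1}"
      by simp
    then have "((\<lambda>l. g (l*h) * cp l (-m - of_nat d - 1))
       has_integral (of_real h * integral {0..1} (\<lambda>u. hderiv (Suc 0) g (h*u) * Uf a 0 u) + g 0 / a)) {0..1}"
      by (rule has_integral_eq[rotated]) (simp add: a_def algebra_simps)
    then have "trP g m d h = of_real h * integral {0..1} (\<lambda>u. hderiv (Suc 0) g (h*u) * Uf a 0 u) + g 0 / a"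
      unfolding trP_def by (rule integral_unique)
    then show ?case by (simp add: a_def)
  next
    case (Suc k)
    define F where "F u = hderiv (Suc k) g (h*u) * Uf a (Suc k) u" for u
    have "((\<lambda>u. hderiv (Suc k) g (h*u) * (- Uf a k u) + of_real h * hderiv (Suc (Suc k)) g (h*u) * Uf a (Suc k) u) has_integral (F 1 - F 0)) {0..1}"
      unfolding F_def
      by (intro fundamental_theorem_of_calculus has_vector_derivative_mult Uf_der hDc a) auto
    moreover have "F 1 - F 0 = - (hderiv (Suc k) g 0 / (of_nat (fact (Suc k)) * (of_nat (Suc k) + a)))"
      by (simp add: F_def Uf_one Uf_zero[OF a] del: Uf.simps of_nat_Suc fact_Suc)
    ultimately have R: "((\<lambda>u. hderiv (Suc k) g (h*u) * (- Uf a k u) + of_real h * hderiv (Suc (Suc k)) g (h*u) * Uf a (Suc k) u)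
       has_integral - (hderiv (Suc k) g 0 / (of_nat (fact (Suc k)) * (of_nat (Suc k) + a)))) {0..1}"
      by simp
    define Q where "Q = integral {0..1} (\<lambda>u. hderiv (Suc k) g (h*u) * Uf a k u)"
    define P where "P = integral {0..1} (\<lambda>u. hderiv (Suc (Suc k)) g (h*u) * Uf a (Suc k) u)"
    have "((\<lambda>u. - (hderiv (Suc k) g (h*u) * Uf a k u) + of_real h * (hderiv (Suc (Suc k)) g (h*u) * Uf a (Suc k) u))
       has_integral (- Q + of_real h * P)) {0..1}"
      unfolding P_def Q_def
      by (intro has_integral_add has_integral_neg has_integral_mult_right integrable_integral int)
    moreover from R have "((\<lambda>u. - (hderiv (Suc k) g (h*u) * Uf a k u) + of_real h * (hderiv (Suc (Suc k)) g (h*u) * Uf a (Suc k) u))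
       has_integral - (hderiv (Suc k) g 0 / (of_nat (fact (Suc k)) * (of_nat (Suc k) + a)))) {0..1}"
      by (rule has_integral_eq[rotated]) (simp add: algebra_simps del: Uf.simps)
    ultimately have eqQ: "- Q + of_real h * P = - (hderiv (Suc k) g 0 / (of_nat (fact (Suc k)) * (of_nat (Suc k) + a)))"
      by (rule has_integral_unique)
    have QP: "Q = of_real h * P + hderiv (Suc k) g 0 / (of_nat (fact (Suc k)) * (of_nat (Suc k) + a))"
      using eqQ by (simp add: algebra_simps eq_neg_iff_add_eq_0 del: Uf.simps of_nat_Suc fact_Suc)
    have den: "of_nat (Suc k) - m - of_nat d = of_nat (Suc k) + a" by (simp add: a_def)
    show ?case
      unfolding Suc[folded Q_def] P_def[symmetric] QP
      by (simp add: den a_def algebra_simps del: Uf.simps of_nat_Suc fact_Suc)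
  qed
qed



definition fI :: "complex \<Rightarrow> nat \<Rightarrow> real \<Rightarrow> complex" where
  "fI a k t = cp t (-a - of_nat (Suc k)) * of_real ((1-t)^k)"
definition II :: "complex \<Rightarrow> nat \<Rightarrow> real \<Rightarrow> complex" where
  "II a k u = integral {u..1} (fI a k)"
definition Vf :: "complex \<Rightarrow> nat \<Rightarrow> real \<Rightarrow> complex" where
  "Vf a k u = cp u (of_nat k + a) * II a k u / of_nat (fact k)"

lemma fI_cont: "0 < u \<Longrightarrow> continuous_on {u..1} (fI a k)"
  unfolding fI_def by (intro continuous_intros cp_cont) auto

lemma fI_int: "0 < u \<Longrightarrow> (fI a k has_integral II a k u) {u..1}"
  unfolding II_def by (intro integrable_integral integrable_continuous_real fI_cont)

lemma rec_id:
  assumes u: "0 < u" "u \<le> 1"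
  shows "(of_nat (Suc k) + a) * II a (Suc k) u - cp u (-a - of_nat (Suc k)) * of_real ((1-u)^(Suc k))
      = - of_nat (Suc k) * II a k u"
proof -
  define \<phi> where "\<phi> t = cp t (-a - of_nat (Suc k)) * of_real ((1-t)^(Suc k))" for t
  have der: "((\<lambda>t. of_real ((1-t)^(Suc k)) :: complex) has_vector_derivative of_real (of_nat (Suc k) * (1-t)^k * (-1))) (at t within S)" for t S
    by (intro has_vector_derivative_of_real) (rule derivative_eq_intros refl | simp)+
  have "((\<lambda>t. cp t (-a - of_nat (Suc k)) * of_real (of_nat (Suc k) * (1-t)^k * (-1))
       + ((-a - of_nat (Suc k)) * cp t (-a - of_nat (Suc k) - 1)) * of_real ((1-t)^(Suc k)))
      has_integral (\<phi> 1 - \<phi> u)) {u..1}"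
    unfolding \<phi>_def
    by (intro fundamental_theorem_of_calculus has_vector_derivative_mult der cp_deriv) (use u in auto)
  moreover have "\<phi> 1 - \<phi> u = - cp u (-a - of_nat (Suc k)) * of_real ((1-u)^(Suc k))"
    by (simp add: \<phi>_def)
  moreover have "(-a - of_nat (Suc k) - 1) = -a - of_nat (Suc (Suc k))" by simp
  ultimately have H1: "((\<lambda>t. - of_nat (Suc k) * fI a k t - (a + of_nat (Suc k)) * fI a (Suc k) t)
      has_integral (- cp u (-a - of_nat (Suc k)) * of_real ((1-u)^(Suc k)))) {u..1}"
    by (rule_tac has_integral_eq[rotated]) (auto simp: fI_def algebra_simps)
  have H2: "((\<lambda>t. - of_nat (Suc k) * fI a k t - (a + of_nat (Suc k)) * fI a (Suc k) t)
      has_integral (- of_nat (Suc k) * II a k u - (a + of_nat (Suc k)) * II a (Suc k) u)) {u..1}"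
    by (intro has_integral_diff has_integral_mult_right fI_int u)
  from has_integral_unique[OF H1 H2] show ?thesis by (simp add: algebra_simps)
qed

lemma Vf_der:
  assumes u: "0 < u" and t: "t \<in> {u..1}"
  shows "(Vf a (Suc k) has_vector_derivative - Vf a k t) (at t within {u..1})"
proof -
  have t0: "t > 0" "t \<le> 1" using u t by auto
  have IId: "(II a j has_vector_derivative - fI a j t) (at t within {u..1})" for j
  proof -
    have "II a j = (\<lambda>t. integral {t..1} (fI a j))" by (auto simp: II_def)
    then show ?thesis using integral_has_vector_derivative'[OF fI_cont[OF u] t] by simp
  qed
  define A where "A = cp t (of_nat k + a)"
  define C where "C = cp t (-a - of_nat (Suc (Suc k)))"
  have cpS: "cp t (of_nat (Suc k) + a) = of_real t * A"
    unfolding A_def using cp_add1[of t "of_nat k + a"] t0 by (simp add: add_ac)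
  have e: "-a - of_nat (Suc k) = (-a - of_nat (Suc (Suc k))) + (1::complex)" by simp
  have cpB: "cp t (-a - of_nat (Suc k)) = of_real t * C"
    unfolding C_def e by (rule cp_add1) (use t0 in simp)
  have cpm1: "cp t (of_nat (Suc k) + a - 1) = A" unfolding A_def by (simp add: algebra_simps)
  have "((\<lambda>t. cp t (of_nat (Suc k) + a) * II a (Suc k) t / of_nat (fact (Suc k))) has_vector_derivative
      (cp t (of_nat (Suc k) + a) * (- fI a (Suc k) t) + ((of_nat (Suc k) + a) * cp t (of_nat (Suc k) + a - 1)) * II a (Suc k) t)
        / of_nat (fact (Suc k))) (at t within {u..1})"
    by (intro has_vector_derivative_divide has_vector_derivative_mult IId cp_deriv t0)
  moreover have "(cp t (of_nat (Suc k) + a) * (- fI a (Suc k) t) + ((of_nat (Suc k) + a) * cp t (of_nat (Suc k) + a - 1)) * II a (Suc k) t)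
        / of_nat (fact (Suc k)) = - Vf a k t"
  proof -
    have r: "(of_nat (Suc k) + a) * II a (Suc k) t = of_real t * C * of_real ((1-t)^(Suc k)) - of_nat (Suc k) * II a k t"
      using rec_id[OF t0, of k a] cpB by (simp add: algebra_simps)
    have "cp t (of_nat (Suc k) + a) * (- fI a (Suc k) t) + ((of_nat (Suc k) + a) * cp t (of_nat (Suc k) + a - 1)) * II a (Suc k) t
        = - of_real t * A * C * of_real ((1-t)^(Suc k)) + A * ((of_nat (Suc k) + a) * II a (Suc k) t)"
      unfolding cpS cpm1 by (simp add: fI_def C_def algebra_simps)
    also have "\<dots> = - of_nat (Suc k) * A * II a k t"
      unfolding r by (simp add: algebra_simps)
    finally have fin: "cp t (of_nat (Suc k) + a) * (- fI a (Suc k) t) + ((of_nat (Suc k) + a) * cp t (of_nat (Suc k) + a - 1)) * II a (Suc k) t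
        = - of_nat (Suc k) * A * II a k t" .
    have ff: "(of_nat (fact (Suc k)) :: complex) = of_nat (Suc k) * of_nat (fact k)"
      by (simp only: fact_Suc of_nat_mult of_nat_id)
    have sp: "(of_nat (Suc k) :: complex) \<noteq> 0" by (rule of_nat_neq_0)
    have g2: "\<And>n X Y F. n \<noteq> 0 \<Longrightarrow> - n * X * Y / (n * F) = - (X * Y / (F::complex))"
      by (simp add: field_simps)
    show ?thesis unfolding fin ff Vf_def A_def by (rule g2[OF sp])
  qed
  moreover have "Vf a (Suc k) = (\<lambda>t. cp t (of_nat (Suc k) + a) * II a (Suc k) t / of_nat (fact (Suc k)))"
    by (auto simp: Vf_def)
  ultimately show ?thesis by simp
qed



lemma t1: "a \<noteq> 0 \<Longrightarrow> - ((-a) * cp t (-a - 1)) / a = fI a 0 t"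
  by (simp add: fI_def)

lemma Uf_Vf:
  assumes a: "Re a > 0" and u: "0 < u" "u \<le> 1"
  shows "Uf a k u = Vf a k u"
  using u
proof (induction k arbitrary: u)
  case 0
  have anz: "a \<noteq> 0" using a by auto
  have u0: "0 < u" "u \<le> 1" using 0 by auto
  have dd: "((\<lambda>t. - cp t (-a) / a) has_vector_derivative (- ((-a) * cp t (-a - 1)) / a)) (at t within {u..1})"
    if "t \<in> {u..1}" for t
  proof -
    have "t > 0" using that u0 by auto
    then show ?thesis by (intro has_vector_derivative_divide has_vector_derivative_minus cp_deriv)
  qed
  have "((\<lambda>t. - ((-a) * cp t (-a - 1)) / a) has_integral ((- cp 1 (-a)) / a - (- cp u (-a)) / a)) {u..1}"
    by (rule fundamental_theorem_of_calculus[OF u0(2) dd])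
  moreover have "- ((-a) * cp t (-a - 1)) / a = fI a 0 t" for t
    using anz by (rule t1)
  moreover have "(- cp 1 (-a)) / a - (- cp u (-a)) / a = (cp u (-a) - 1) / a"
    by (simp add: diff_divide_distrib)
  ultimately have "(fI a 0 has_integral (cp u (-a) - 1) / a) {u..1}"
    by simp
  then have "II a 0 u = (cp u (-a) - 1) / a"
    using fI_int[OF u0(1)] has_integral_unique by blast
  then have "Vf a 0 u = cp u a * ((cp u (-a) - 1) / a)"
    by (simp add: Vf_def)
  also have "\<dots> = (cp u a * cp u (-a) - cp u a) / a" by (simp add: algebra_simps diff_divide_distrib)
  also have "\<dots> = (1 - cp u a) / a" using cp_inv[of u a] u0 by simp
  finally show ?case by simp
next
  case (Suc k)
  have uu: "0 < u" "u \<le> 1" using Suc.prems by auto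
  have dV: "\<And>t. t \<in> {u..1} \<Longrightarrow> (Vf a (Suc k) has_vector_derivative - Vf a k t) (at t within {u..1})"
    using Vf_der[OF uu(1)] by blast
  have "((\<lambda>t. - Vf a k t) has_integral (Vf a (Suc k) 1 - Vf a (Suc k) u)) {u..1}"
    by (rule fundamental_theorem_of_calculus[OF uu(2) dV])
  moreover have "Vf a (Suc k) 1 = 0" by (simp add: Vf_def II_def)
  ultimately have "((\<lambda>t. - Vf a k t) has_integral - Vf a (Suc k) u) {u..1}"
    by simp
  then have "((\<lambda>t. - (- Vf a k t)) has_integral - (- Vf a (Suc k) u)) {u..1}"
    by (rule has_integral_neg)
  then have "(Vf a k has_integral Vf a (Suc k) u) {u..1}"
    by simp
  then have "integral {u..1} (Vf a k) = Vf a (Suc k) u" by (rule integral_unique)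
  moreover have "integral {u..1} (Uf a k) = integral {u..1} (Vf a k)"
  proof (rule integral_cong)
    fix t assume "t \<in> {u..1}"
    then have "0 < t" "t \<le> 1" using uu by auto
    then show "Uf a k t = Vf a k t" by (rule Suc.IH)
  qed
  ultimately show ?case by simp
qed




lemma betainc_II:
  assumes u: "0 < u" "u \<le> 1"
  shows "betainc (1 - u) (of_nat (Suc k)) (m + of_nat d - of_nat (Suc k) + 1) = II (-m - of_nat d) k u"
proof -
  define a where "a = -m - of_nat d"
  have "II a k u = integral {-1..-u} (\<lambda>x. fI a k (-x))"
    unfolding II_def using integral_reflect_real[of 1 u "fI a k"] by simp
  also have "\<dots> = integral {0..1-u} ((\<lambda>x. fI a k (-x)) \<circ> (+) (-1))"
    using integral_shift_Icc_real[of 0 "1-u" "\<lambda>x. fI a k (-x)" "-1"] by simp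
  also have "\<dots> = integral {0..1-u} (\<lambda>t. cp t (of_nat (Suc k) - 1) * cp (1-t) (m + of_nat d - of_nat (Suc k) + 1 - 1))"
  proof (rule integral_spike[of "{0}"])
    show "negligible {0::real}" by simp
    fix x :: real assume "x \<in> {0..1-u} - {0}"
    then have "x \<noteq> 0" by auto
    then have "cp x (of_nat k) = of_real (x ^ k)" by (simp add: cp_nat)
    moreover have "m + of_nat d - of_nat (Suc k) + 1 - 1 = -a - of_nat (Suc k)"
      by (simp add: a_def algebra_simps)
    ultimately show "cp x (of_nat (Suc k) - 1) * cp (1-x) (m + of_nat d - of_nat (Suc k) + 1 - 1)
        = ((\<lambda>x. fI a k (-x)) \<circ> (+) (-1)) x"
      by (simp add: fI_def diff_diff_eq add.commute)
  qed
  finally show ?thesis by (simp add: betainc_def a_def)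
qed

theorem mainTheorem9:
  fixes g :: "real \<Rightarrow> complex" and m :: complex and d :: nat and n :: nat and h :: real
  assumes smooth: "\<And>j x. hderiv j g differentiable (at x)"
    and m: "Re m < - real d"
    and n: "n \<ge> 1"
    and h: "h \<ge> 0"
  shows "trP g m d h =
           (\<Sum>j<n. complex_of_real (h ^ j) / (of_nat (fact j) * (of_nat j - m - of_nat d))
                     * hderiv j g 0)
         + complex_of_real (h ^ n / fact (n - 1)) *
           integral {0..1} (\<lambda>u. hderiv n g (h * u)
              * (complex_of_real u) powr (of_nat n - m - of_nat d - 1)
              * integral {u..1} (\<lambda>t. (complex_of_real t) powr (m + of_nat d - of_nat n)
                                      * complex_of_real ((1 - t) ^ (n - 1))))
       \<and> trP g m d 1 =
           (\<Sum>j<n. 1 / (of_nat (fact j) * (of_nat j - m - of_nat d)) * hderiv j g 0)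
         + complex_of_real (1 / fact (n - 1)) *
           integral {0..1} (\<lambda>u. hderiv n g u
              * (complex_of_real u) powr (of_nat n - m - of_nat d - 1)
              * betainc (1 - u) (of_nat n) (m + of_nat d - of_nat n + 1))"
proof -
  obtain k where nk: "n = Suc k" using n by (cases n) auto
  define a where "a = -m - of_nat d"
  have a: "Re a > 0" using m by (simp add: a_def)
  have e1: "of_nat n - m - of_nat d - 1 = of_nat k + a" by (simp add: nk a_def)
  have e2: "(\<lambda>t. (complex_of_real t) powr (m + of_nat d - of_nat n) * complex_of_real ((1 - t) ^ (n - 1))) = fI a k"
    by (rule ext) (simp add: fI_def nk a_def algebra_simps)
  have P1: "trP g m d h' =
           (\<Sum>j<n. complex_of_real (h' ^ j) / (of_nat (fact j) * (of_nat j - m - of_nat d))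
                     * hderiv j g 0)
         + complex_of_real (h' ^ n / fact (n - 1)) *
           integral {0..1} (\<lambda>u. hderiv n g (h' * u)
              * (complex_of_real u) powr (of_nat n - m - of_nat d - 1)
              * integral {u..1} (\<lambda>t. (complex_of_real t) powr (m + of_nat d - of_nat n)
                                      * complex_of_real ((1 - t) ^ (n - 1))))" for h'
  proof -
    have "integral {0..1} (\<lambda>u. hderiv n g (h' * u)
              * (complex_of_real u) powr (of_nat n - m - of_nat d - 1)
              * integral {u..1} (\<lambda>t. (complex_of_real t) powr (m + of_nat d - of_nat n)
                                      * complex_of_real ((1 - t) ^ (n - 1))))
        = integral {0..1} (\<lambda>u. of_nat (fact k) * (hderiv (Suc k) g (h' * u) * Uf a k u))"
    proof (rule integral_spike[of "{0}"])
      show "negligible {0::real}" by simp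
      fix u :: real assume "u \<in> {0..1} - {0}"
      then have u: "0 < u" "u \<le> 1" by auto
      have "Uf a k u = Vf a k u" by (rule Uf_Vf[OF a u])
      then show "of_nat (fact k) * (hderiv (Suc k) g (h' * u) * Uf a k u) =
          hderiv n g (h' * u) * (complex_of_real u) powr (of_nat n - m - of_nat d - 1)
              * integral {u..1} (\<lambda>t. (complex_of_real t) powr (m + of_nat d - of_nat n)
                                      * complex_of_real ((1 - t) ^ (n - 1)))"
        unfolding e1 e2 by (simp add: Vf_def II_def nk)
    qed
    also have "\<dots> = of_nat (fact k) * integral {0..1} (\<lambda>u. hderiv (Suc k) g (h' * u) * Uf a k u)"
      by (rule integral_mult_right)
    finally have I: "integral {0..1} (\<lambda>u. hderiv n g (h' * u)
              * (complex_of_real u) powr (of_nat n - m - of_nat d - 1)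
              * integral {u..1} (\<lambda>t. (complex_of_real t) powr (m + of_nat d - of_nat n)
                                      * complex_of_real ((1 - t) ^ (n - 1))))
       = of_nat (fact k) * integral {0..1} (\<lambda>u. hderiv (Suc k) g (h' * u) * Uf a k u)" .
    have fk: "(of_nat (fact k) :: complex) \<noteq> 0" by simp
    show ?thesis
      unfolding I using main_lemma[OF smooth m, of h' k] fk
      by (simp add: nk a_def of_real_divide)
  qed
  have "integral {0..1} (\<lambda>u. hderiv n g u
              * (complex_of_real u) powr (of_nat n - m - of_nat d - 1)
              * betainc (1 - u) (of_nat n) (m + of_nat d - of_nat n + 1))
      = integral {0..1} (\<lambda>u. hderiv n g (1 * u)
              * (complex_of_real u) powr (of_nat n - m - of_nat d - 1)
              * integral {u..1} (\<lambda>t. (complex_of_real t) powr (m + of_nat d - of_nat n)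
                                      * complex_of_real ((1 - t) ^ (n - 1))))"
  proof (rule integral_spike[of "{0}"])
    show "negligible {0::real}" by simp
    fix u :: real assume "u \<in> {0..1} - {0}"
    then have u: "0 < u" "u \<le> 1" by auto
    show "hderiv n g (1 * u)
              * (complex_of_real u) powr (of_nat n - m - of_nat d - 1)
              * integral {u..1} (\<lambda>t. (complex_of_real t) powr (m + of_nat d - of_nat n)
                                      * complex_of_real ((1 - t) ^ (n - 1)))
        = hderiv n g u
              * (complex_of_real u) powr (of_nat n - m - of_nat d - 1)
              * betainc (1 - u) (of_nat n) (m + of_nat d - of_nat n + 1)"
      unfolding e2 using betainc_II[OF u, of k m d] by (simp add: nk II_def a_def)
  qed
  then show ?thesis using P1[of h] P1[of 1] by simp
qed


end
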